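(* Let $K$ be a valued field and $d\ge1$. Then the dual VC-dimension of $\operatorname{Conv}_{K^d}$ is exactly $d$: there are $d$ convex sets $S_1,\dots,S_d\subseteq K^d$ such that all $2^d$ sets $\bigcap_{i\in I}S_i\cap\bigcap_{i\notin I}(K^d\setminus S_i)$, $I\subseteq\{1,\dots,d\}$, are nonempty, but for no $d+1$ convex sets $S_1,\dots,S_{d+1}$ are all $2^{d+1}$ such sets nonempty.
   Context: $K$ is a field with valuation $\nu$ and valuation ring $\mathcal{O}=\{x:\nu(x)\ge0\}$. A set $X\subseteq K^d$ is convex if it is closed under combinations $\sum_{i=1}^n\alpha_ix_i$ with $x_i\in X$, $\alpha_i\in\mathcal{O}$, $\sum\alpha_i=1$; $\operatorname{Conv}_{K^d}$ is the family of all convex subsets of $K^d$. The dual VC-dimension of a family $\mathcal{F}\subseteq\mathcal{P}(X)$ is the largest $k$ such that there exist $S_1,\dots,S_k\in\mathcal{F}$ with $\bigcap_{i\in I}S_i\cap\bigcap_{i\in[k]\setminus I}(X\setminus S_i)\neq\emptyset$ for every $I\subseteq[k]$ (or $\infty$). *)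

theory Defs
  imports "HOL-Analysis.Analysis" "HOL-Library.Extended_Nat"
begin

text \<open>A (Krull) valuation on a field 'a with values in a totally ordered abelian
  group 'g.  The value at 0 (conventionally infinity) is irrelevant and ignored.\<close>
definition valuation :: "('a::field \<Rightarrow> 'g::linordered_ab_group_add) \<Rightarrow> bool" where
  "valuation v \<longleftrightarrow>
     (\<forall>x y. x \<noteq> 0 \<longrightarrow> y \<noteq> 0 \<longrightarrow> v (x * y) = v x + v y) \<and>
     (\<forall>x y. x \<noteq> 0 \<longrightarrow> y \<noteq> 0 \<longrightarrow> x + y \<noteq> 0 \<longrightarrow> min (v x) (v y) \<le> v (x + y))"

text \<open>Valuation ring O = {x. v(x) \<ge> 0} (0 included, since v(0) = infinity).\<close>
definition val_ring :: "('a::field \<Rightarrow> 'g::linordered_ab_group_add) \<Rightarrow> 'a set" where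
  "val_ring v = {x. x = 0 \<or> 0 \<le> v x}"

definition val_convex :: "('a::field \<Rightarrow> 'g::linordered_ab_group_add) \<Rightarrow> ('a ^ 'n) set \<Rightarrow> bool" where
  "val_convex v X \<longleftrightarrow>
     (\<forall>(n::nat) (x::nat \<Rightarrow> 'a ^ 'n) (\<alpha>::nat \<Rightarrow> 'a).
        (\<forall>i<n. x i \<in> X \<and> \<alpha> i \<in> val_ring v) \<and> (\<Sum>i<n. \<alpha> i) = 1
        \<longrightarrow> (\<Sum>i<n. \<alpha> i *s x i) \<in> X)"

definition Conv :: "('a::field \<Rightarrow> 'g::linordered_ab_group_add) \<Rightarrow> ('a ^ 'n) set set" where
  "Conv v = {X. val_convex v X}"

definition dual_shatters :: "'b set \<Rightarrow> 'b set set \<Rightarrow> nat \<Rightarrow> bool" where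
  "dual_shatters X F k \<longleftrightarrow>
     (\<exists>S::nat \<Rightarrow> 'b set. (\<forall>i<k. S i \<in> F) \<and>
        (\<forall>I \<subseteq> {..<k}. X \<inter> (\<Inter>i\<in>I. S i) \<inter> (\<Inter>i\<in>{..<k} - I. X - S i) \<noteq> {}))"

definition dual_vc_dim :: "'b set \<Rightarrow> 'b set set \<Rightarrow> enat" where
  "dual_vc_dim X F =
     (if \<exists>N. \<forall>k. dual_shatters X F k \<longrightarrow> k \<le> N
      then enat (GREATEST k. dual_shatters X F k) else \<infinity>)"

end

theory Submission
  imports Defs
begin

lemma val_mult:
  assumes "valuation v" "x \<noteq> 0" "y \<noteq> 0" shows "v (x * y) = v x + v y"
  using assms unfolding valuation_def by blast

lemma val_one:
  assumes "valuation v" shows "v 1 = 0"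
proof -
  have "v (1*1) = v 1 + v 1" by (rule val_mult[OF assms]) auto
  thus ?thesis by simp
qed

lemma val_neg1:
  assumes "valuation v" shows "v (-1) = 0"
proof -
  have "v ((-1)*(-1)) = v (-1) + v (-1)" by (rule val_mult[OF assms]) auto
  hence h: "v (-1) + v (-1) = 0" using val_one[OF assms] by simp
  show ?thesis
  proof (rule ccontr)
    assume "v (-1) \<noteq> 0"
    hence "v (-1) < 0 \<or> v (-1) > 0" by auto
    thus False using h add_neg_neg[of "v (-1)" "v (-1)"] add_pos_pos[of "v (-1)" "v (-1)"] by auto
  qed
qed

lemma val_uminus:
  assumes "valuation v" "x \<noteq> 0" shows "v (-x) = v x"
proof -
  have "v ((-1)*x) = v (-1) + v x" by (rule val_mult[OF assms(1)]) (use assms in auto)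
  thus ?thesis using val_neg1[OF assms(1)] by simp
qed

lemma val_inverse:
  assumes "valuation v" "y \<noteq> 0" shows "v (inverse y) = - v y"
proof -
  have "v (y * inverse y) = v y + v (inverse y)" by (rule val_mult[OF assms(1)]) (use assms in auto)
  hence "v y + v (inverse y) = 0" using val_one[OF assms(1)] assms(2) by simp
  thus ?thesis by (simp add: eq_neg_iff_add_eq_0 add.commute)
qed

lemma ring_uminus:
  assumes "valuation v" "x \<in> val_ring v" shows "-x \<in> val_ring v"
  using assms val_uminus[OF assms(1), of x] unfolding val_ring_def by (cases "x = 0") auto

lemma ring_add:
  assumes "valuation v" "x \<in> val_ring v" "y \<in> val_ring v" shows "x + y \<in> val_ring v"
proof (cases "x = 0 \<or> y = 0 \<or> x + y = 0")
  case True thus ?thesis using assms by (auto simp: val_ring_def)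
next
  case False
  hence "min (v x) (v y) \<le> v (x+y)" using assms(1) unfolding valuation_def by auto
  moreover have "0 \<le> v x" "0 \<le> v y" using assms False unfolding val_ring_def by auto
  ultimately show ?thesis unfolding val_ring_def by (auto intro: order_trans[of 0 "min (v x) (v y)"])
qed

lemma ring_one: assumes "valuation v" shows "1 \<in> val_ring v"
  using val_one[OF assms] by (auto simp: val_ring_def)

lemma ring_sum:
  assumes "valuation v" "\<And>i. i \<in> A \<Longrightarrow> f i \<in> val_ring v"
  shows "sum f A \<in> val_ring v"
  using assms(2)
proof (induction A rule: infinite_finite_induct)
  case (infinite A) thus ?case by (simp add: val_ring_def)
next
  case empty thus ?case by (simp add: val_ring_def)
next
  case (insert x F) thus ?case using ring_add[OF assms(1)] by auto
qed

lemma no_shatter: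
  fixes v :: "'a::field \<Rightarrow> 'g::linordered_ab_group_add"
  assumes val: "valuation v" and kbig: "CARD('n) < k"
  shows "\<not> dual_shatters (UNIV :: ('a ^ 'n) set) (Conv v) k"
proof
  assume "dual_shatters (UNIV :: ('a ^ 'n) set) (Conv v) k"
  then obtain S :: "nat \<Rightarrow> ('a^'n) set" where SC: "\<forall>i<k. S i \<in> Conv v"
    and at: "\<forall>I \<subseteq> {..<k}. UNIV \<inter> (\<Inter>i\<in>I. S i) \<inter> (\<Inter>i\<in>{..<k} - I. UNIV - S i) \<noteq> {}"
    unfolding dual_shatters_def by blast
  from at[rule_format, of "{..<k}"] obtain q where q: "\<And>i. i<k \<Longrightarrow> q \<in> S i" by auto
  have "\<forall>i<k. \<exists>p. (\<forall>j<k. j \<noteq> i \<longrightarrow> p \<in> S j) \<and> p \<notin> S i"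
  proof (intro allI impI)
    fix i assume "i < k"
    from at[rule_format, of "{..<k} - {i}"] obtain p where
      "p \<in> (\<Inter>j\<in>{..<k} - {i}. S j)" "p \<in> (\<Inter>j\<in>{..<k} - ({..<k} - {i}). UNIV - S j)" by blast
    moreover have "i \<in> {..<k} - ({..<k} - {i})" using \<open>i<k\<close> by auto
    ultimately have "p \<notin> S i" by blast
    thus "\<exists>p. (\<forall>j<k. j \<noteq> i \<longrightarrow> p \<in> S j) \<and> p \<notin> S i" using \<open>p \<in> (\<Inter>j\<in>{..<k} - {i}. S j)\<close> \<open>i<k\<close> by blast
  qed
  then obtain p where p1: "\<And>i j. i<k \<Longrightarrow> j<k \<Longrightarrow> j \<noteq> i \<Longrightarrow> p i \<in> S j"
    and p2: "\<And>i. i<k \<Longrightarrow> p i \<notin> S i" by metis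
  define w where "w i = p i - q" for i
  have "\<exists>c. (\<Sum>i<k. c i *s w i) = 0 \<and> (\<exists>i<k. c i \<noteq> 0)"
  proof (cases "inj_on w {..<k}")
    case True
    define V where "V = w ` {..<k}"
    have cardV: "card V = k" using True unfolding V_def by (simp add: card_image)
    have "vec.dim V \<le> CARD('n)" using vec.dim_subset_UNIV[of V]
      by (simp add: vec.dimension_def card_cart_basis)
    hence "vec.dependent V" using kbig cardV by (intro vec.dependent_biggerset_general) auto
    then obtain u where u1: "\<exists>x\<in>V. u x \<noteq> 0" and u2: "(\<Sum>x\<in>V. u x *s x) = 0"
      using vec.dependent_finite[of V] unfolding V_def by auto
    have "(\<Sum>i<k. u (w i) *s w i) = (\<Sum>x\<in>V. u x *s x)"
      unfolding V_def using sum.reindex[OF True, of "\<lambda>x. u x *s x"] by simp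
    thus ?thesis using u1 u2 unfolding V_def by (intro exI[of _ "\<lambda>i. u (w i)"]) auto
  next
    case False
    then obtain i j where ij: "i<k" "j<k" "i \<noteq> j" "w i = w j" unfolding inj_on_def by auto
    define c where "c l = (if l = i then 1 else if l = j then -1 else (0::'a))" for l
    have "(\<Sum>l<k. c l *s w l) = (\<Sum>l\<in>{i,j}. c l *s w l)"
      by (rule sum.mono_neutral_right) (use ij in \<open>auto simp: c_def\<close>)
    also have "\<dots> = 0" using ij by (simp add: c_def)
    finally show ?thesis using ij by (intro exI[of _ c]) (auto simp: c_def)
  qed
  then obtain c where c1: "(\<Sum>i<k. c i *s w i) = 0" and c2: "\<exists>i<k. c i \<noteq> 0" by blast
  define A where "A = {i. i<k \<and> c i \<noteq> 0}"
  define k0 where "k0 = arg_min_on (\<lambda>i. v (c i)) A"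
  have Afin: "finite A" "A \<noteq> {}" using c2 unfolding A_def by auto
  have k0A: "k0 \<in> A" unfolding k0_def by (rule arg_min_if_finite(1)[OF Afin])
  have k0min: "\<And>i. i \<in> A \<Longrightarrow> v (c k0) \<le> v (c i)"
    using arg_min_if_finite(2)[OF Afin, of "\<lambda>i. v (c i)"] unfolding k0_def[symmetric]
    by (meson not_le)
  have k0k: "k0 < k" and ck0: "c k0 \<noteq> 0" using k0A unfolding A_def by auto
  define \<beta> where "\<beta> i = (if i = k0 then 0 else -(c i / c k0))" for i
  have \<beta>ring: "\<beta> i \<in> val_ring v" if "i < k" for i
  proof (cases "i = k0 \<or> c i = 0")
    case True thus ?thesis by (auto simp: \<beta>_def val_ring_def)
  next
    case False
    hence "i \<in> A" using that unfolding A_def by auto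
    hence le: "v (c k0) \<le> v (c i)" by (rule k0min)
    have "v (c i / c k0) = v (c i) + v (inverse (c k0))"
      using val False ck0 unfolding valuation_def divide_inverse by auto
    also have "\<dots> = v (c i) - v (c k0)" using val_inverse[OF val ck0] by simp
    finally have "c i / c k0 \<in> val_ring v" using le unfolding val_ring_def by auto
    thus ?thesis using ring_uminus[OF val] False by (simp add: \<beta>_def)
  qed
  have s0: "(\<Sum>i<k. (-(c i / c k0)) *s w i) = 0"
  proof -
    have "(\<Sum>i<k. (-(c i / c k0)) *s w i) = (- inverse (c k0)) *s (\<Sum>i<k. c i *s w i)"
      by (simp add: vec.scale_sum_right divide_inverse mult.commute)
    thus ?thesis using c1 by simp
  qed
  have bw: "(\<Sum>i<k. \<beta> i *s w i) = w k0"
  proof -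
    have e: "\<beta> i *s w i = (-(c i / c k0)) *s w i + (if i = k0 then w i else 0)" for i
      using ck0 by (cases "i = k0") (auto simp: \<beta>_def)
    have "(\<Sum>i<k. \<beta> i *s w i) = (\<Sum>i<k. (-(c i / c k0)) *s w i) + (\<Sum>i<k. (if i = k0 then w i else 0))"
      unfolding e sum.distrib ..
    also have "\<dots> = w k0" using s0 k0k by simp
    finally show ?thesis .
  qed
  define x where "x i = (if i < k \<and> i \<noteq> k0 then p i else q)" for i
  define \<alpha> where "\<alpha> i = (if i < k then \<beta> i else 1 - (\<Sum>j<k. \<beta> j))" for i
  have "val_convex v (S k0)" using SC k0k unfolding Conv_def by auto
  moreover have "\<forall>i<Suc k. x i \<in> S k0 \<and> \<alpha> i \<in> val_ring v"
  proof (intro allI impI conjI)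
    fix i assume "i < Suc k"
    show "x i \<in> S k0" using p1 q k0k by (auto simp: x_def)
    show "\<alpha> i \<in> val_ring v"
    proof (cases "i < k")
      case True thus ?thesis using \<beta>ring by (simp add: \<alpha>_def)
    next
      case False
      have "(\<Sum>j<k. \<beta> j) \<in> val_ring v" by (rule ring_sum[OF val]) (use \<beta>ring in auto)
      hence "1 + - (\<Sum>j<k. \<beta> j) \<in> val_ring v"
        using ring_add[OF val ring_one[OF val] ring_uminus[OF val]] by blast
      thus ?thesis using False by (simp add: \<alpha>_def)
    qed
  qed
  moreover have "(\<Sum>i<Suc k. \<alpha> i) = 1" by (simp add: \<alpha>_def)
  ultimately have mem: "(\<Sum>i<Suc k. \<alpha> i *s x i) \<in> S k0"
    unfolding val_convex_def by blast
  have "(\<Sum>i<Suc k. \<alpha> i *s x i) = (\<Sum>i<k. \<beta> i *s p i) + (1 - (\<Sum>j<k. \<beta> j)) *s q"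
  proof -
    have "(\<Sum>i<k. \<alpha> i *s x i) = (\<Sum>i<k. \<beta> i *s p i)"
      by (rule sum.cong) (auto simp: \<alpha>_def x_def \<beta>_def)
    thus ?thesis by (simp add: \<alpha>_def x_def)
  qed
  also have "\<dots> = q + (\<Sum>i<k. \<beta> i *s w i)"
    by (simp add: w_def vec.scale_right_diff_distrib sum_subtractf vec.scale_left_diff_distrib
        vec.scale_sum_left)
  also have "\<dots> = p k0" using bw by (simp add: w_def)
  finally have "p k0 \<in> S k0" using mem by simp
  thus False using p2 k0k by blast
qed

lemma shatter_d:
  fixes v :: "'a::field \<Rightarrow> 'g::linordered_ab_group_add"
  shows "dual_shatters (UNIV :: ('a ^ 'n) set) (Conv v) CARD('n)"
proof -
  obtain h :: "nat \<Rightarrow> 'n" where h: "bij_betw h {0..<CARD('n)} UNIV"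
    using ex_bij_betw_nat_finite[of "UNIV :: 'n set"] by auto
  define S where "S i = {x :: 'a^'n. x $ h i = 0}" for i
  have "S i \<in> Conv v" for i
    unfolding S_def Conv_def val_convex_def by (auto simp: sum_component)
  moreover have "UNIV \<inter> (\<Inter>i\<in>I. S i) \<inter> (\<Inter>i\<in>{..<CARD('n)} - I. UNIV - S i) \<noteq> {}"
    if "I \<subseteq> {..<CARD('n)}" for I
  proof -
    define z :: "'a^'n" where "z = (\<chi> j. if inv_into {0..<CARD('n)} h j \<in> I then 0 else 1)"
    have zi: "z $ h i = (if i \<in> I then 0 else 1)" if "i < CARD('n)" for i
      using bij_betw_inv_into_left[OF h, of i] that by (simp add: z_def)
    have "z \<in> UNIV \<inter> (\<Inter>i\<in>I. S i) \<inter> (\<Inter>i\<in>{..<CARD('n)} - I. UNIV - S i)"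
      using zi \<open>I \<subseteq> _\<close> by (auto simp: S_def)
    thus ?thesis by blast
  qed
  ultimately show ?thesis unfolding dual_shatters_def by blast
qed

theorem theorem4p10:
  fixes v :: "'a::field \<Rightarrow> 'g::linordered_ab_group_add"
  assumes "valuation v"
  shows "dual_vc_dim (UNIV :: ('a ^ 'n) set) (Conv v) = enat CARD('n)
       \<and> dual_shatters (UNIV :: ('a ^ 'n) set) (Conv v) CARD('n)
       \<and> \<not> dual_shatters (UNIV :: ('a ^ 'n) set) (Conv v) (CARD('n) + 1)"
proof -
  have bnd: "\<And>k. dual_shatters (UNIV :: ('a ^ 'n) set) (Conv v) k \<Longrightarrow> k \<le> CARD('n)"
    using no_shatter[OF assms] by (meson not_le)
  have sd: "dual_shatters (UNIV :: ('a ^ 'n) set) (Conv v) CARD('n)" by (rule shatter_d)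
  have "(GREATEST k. dual_shatters (UNIV :: ('a ^ 'n) set) (Conv v) k) = CARD('n)"
    by (rule Greatest_equality) (use sd bnd in auto)
  hence "dual_vc_dim (UNIV :: ('a ^ 'n) set) (Conv v) = enat CARD('n)"
    unfolding dual_vc_dim_def using bnd by auto
  moreover have "\<not> dual_shatters (UNIV :: ('a^'n) set) (Conv v) (CARD('n)+1)"
    by (rule no_shatter[OF assms]) simp
  ultimately show ?thesis using sd by simp
qed

end
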